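(* Assume the seeds are i.i.d. uniform on $[n]$. Let $(m(n))$, indexed by even $n\ge6$, be a sequence of positive integers with $m(n)=o(\sqrt n)$, let $\eta\in(0,\tfrac12)$ be fixed, and let $(l_n)$ be integers with $2\le l_n<n/2$ and $l_n=\eta n+o(\sqrt n)$. Then: (i) if $\lim_{n\to\infty}m(n)=m_0\in\mathbb N$, then $\lim_{n\to\infty}p_1(n,m(n),l_n)=p(\infty,m_0,\eta)$; (ii) if $\lim_{n\to\infty}m(n)=\infty$, then $\lim_{n\to\infty}p_1(n,m(n),l_n)=\lim_{m\to\infty}p(\infty,m,\eta)=1$.
   Context: Discrete model: candidates $[n]$, $m$ voters; voter $j$ has the clockwise oriented preference list $(s_j,s_j+1,\dots,n,1,\dots,s_j-1)$ with seed $s_j$; seeds independent uniform on $[n]$. In an election among a non-empty $S\subseteq[n]$ each voter votes for the first candidate of $S$ in its list; $\Xi_S(i)$ is the number of votes for $i$. Two-round election with partition $(A,B)$: the winner of $A$ is the $a\in A$ with $\Xi_A(a)>\Xi_A(a')$ for all other $a'\in A$ (if none, nobody wins); likewise for $B$; between first-round winners $a,b$, $a$ wins iff $\Xi_{\{a,b\}}(a)>\Xi_{\{a,b\}}(b)$ (ties: nobody wins). $A^{(1,n,l)}=\{1,\dots,l\}\cup\{l+2i:1\le i\le(n-2l)/2\}$, $B^{(1,n,l)}=[n]\setminus A^{(1,n,l)}$, and $p_1(n,m,l)$ is the probability that candidate 1 wins with partition $(A^{(1,n,l)},B^{(1,n,l)})$. Continuous model: $U_1,\dots,U_m$ i.i.d.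 uniform on $[0,1)$, and for an arc $(a,b)$ of the circle $[0,1)$ (taken mod 1), $N_{(a,b)}=\sum_{j=1}^m\mathbf I_{(a,b)}(U_j)$. For $\eta\in(0,\tfrac12)$, $p(\infty,m,\eta)$ is the probability of the event $\{N_{(1-\eta,1)}\ge2,\ N_{(0,\eta)}\ge2,\ N_{(0,\eta)}<m/2\}$; explicitly $$p(\infty,m,\eta)=\sum_{s=2}^{\lfloor (m-1)/2\rfloor}\sum_{t=2}^{m-s}\frac{m!}{s!\,t!\,(m-s-t)!}\eta^{s+t}(1-2\eta)^{m-s-t}.$$ *)

theory Defs
  imports "HOL-Probability.Probability"
begin

text \<open>Discrete model. Candidates are 1..n. A voter with seed s has the list
 (s, s+1, ..., n, 1, ..., s-1); the position of candidate i in this list is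
 (i + n - s) mod n.\<close>

definition pos :: "nat \<Rightarrow> nat \<Rightarrow> nat \<Rightarrow> nat" where
  "pos n s i = (i + n - s) mod n"

definition first_choice :: "nat \<Rightarrow> nat \<Rightarrow> nat set \<Rightarrow> nat" where
  "first_choice n s S = (THE i. i \<in> S \<and> (\<forall>j\<in>S. pos n s i \<le> pos n s j))"

definition Xi :: "nat \<Rightarrow> nat \<Rightarrow> (nat \<Rightarrow> nat) \<Rightarrow> nat set \<Rightarrow> nat \<Rightarrow> nat" where
  "Xi n m seed S i = card {j \<in> {..<m}. first_choice n (seed j) S = i}"

definition wins_in :: "nat \<Rightarrow> nat \<Rightarrow> (nat \<Rightarrow> nat) \<Rightarrow> nat set \<Rightarrow> nat \<Rightarrow> bool" where
  "wins_in n m seed S a \<longleftrightarrow> a \<in> S \<and> (\<forall>a'\<in>S - {a}. Xi n m seed S a' < Xi n m seed S a)"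

definition wins_two_round ::
  "nat \<Rightarrow> nat \<Rightarrow> (nat \<Rightarrow> nat) \<Rightarrow> nat set \<Rightarrow> nat set \<Rightarrow> nat \<Rightarrow> bool" where
  "wins_two_round n m seed A B c \<longleftrightarrow>
     (\<exists>a b. wins_in n m seed A a \<and> wins_in n m seed B b \<and>
        ((c = a \<and> Xi n m seed {a, b} b < Xi n m seed {a, b} a) \<or>
         (c = b \<and> Xi n m seed {a, b} a < Xi n m seed {a, b} b)))"

definition A1 :: "nat \<Rightarrow> nat \<Rightarrow> nat set" where
  "A1 n l = {1..l} \<union> {l + 2 * i | i. 1 \<le> i \<and> i \<le> (n - 2 * l) div 2}"

definition B1 :: "nat \<Rightarrow> nat \<Rightarrow> nat set" where
  "B1 n l = {1..n} - A1 n l"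

text \<open>p_1(n,m,l): seeds i.i.d. uniform on [n], i.e. uniform over all seed vectors.\<close>
definition p1 :: "nat \<Rightarrow> nat \<Rightarrow> nat \<Rightarrow> real" where
  "p1 n m l = real (card {seed \<in> {..<m} \<rightarrow>\<^sub>E {1..n}.
                     wins_two_round n m seed (A1 n l) (B1 n l) 1}) / real n ^ m"

definition N_arc :: "nat \<Rightarrow> real \<Rightarrow> real \<Rightarrow> (nat \<Rightarrow> real) \<Rightarrow> nat" where
  "N_arc m a b U = card {j \<in> {..<m}. U j \<in> {a<..<b}}"

definition unif_cube :: "nat \<Rightarrow> (nat \<Rightarrow> real) measure" where
  "unif_cube m = PiM {..<m} (\<lambda>_. uniform_measure lborel {0..<1})"

definition p_inf :: "nat \<Rightarrow> real \<Rightarrow> real" where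
  "p_inf m \<eta> = measure (unif_cube m)
     {U \<in> space (unif_cube m). N_arc m (1 - \<eta>) 1 U \<ge> 2 \<and> N_arc m 0 \<eta> U \<ge> 2
        \<and> real (N_arc m 0 \<eta> U) < real m / 2}"

end

theory Submission
  imports Defs
begin

lemma pos_eq:
  assumes "1 \<le> s" "s \<le> n" "1 \<le> i" "i \<le> n"
  shows "pos n s i = (if s \<le> i then i - s else i + n - s)"
proof (cases "s \<le> i")
  case True
  then have "i + n - s = (i - s) + n" by simp
  moreover have "i - s < n" using assms by linarith
  moreover have "((i - s) + n) mod n = i - s" using calculation(2) by simp
  ultimately show ?thesis using True unfolding pos_def by metis
next
  case False
  then show ?thesis unfolding pos_def using assms by simp
qed

lemma pos_inj:
  assumes "1 \<le> s" "s \<le> n" "1 \<le> i" "i \<le> n" "1 \<le> j" "j \<le> n" "pos n s i = pos n s j"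
  shows "i = j"
  using assms pos_eq[of s n i] pos_eq[of s n j] by (auto split: if_splits)

lemma fc_eqI:
  assumes "S \<subseteq> {1..n}" "s \<in> {1..n}" "i \<in> S" "\<And>j. j \<in> S \<Longrightarrow> pos n s i \<le> pos n s j"
  shows "first_choice n s S = i"
  unfolding first_choice_def
proof (rule the_equality)
  show "i \<in> S \<and> (\<forall>j\<in>S. pos n s i \<le> pos n s j)" using assms by auto
next
  fix x assume x: "x \<in> S \<and> (\<forall>j\<in>S. pos n s x \<le> pos n s j)"
  then have "pos n s x = pos n s i" using assms by (meson antisym)
  moreover have "x \<in> {1..n}" "i \<in> {1..n}" using assms x by auto
  ultimately show "x = i" using pos_inj[of s n x i] assms(2) by simp
qed

lemma fc_props:
  assumes "S \<subseteq> {1..n}" "s \<in> {1..n}" "S \<noteq> {}"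
  shows "first_choice n s S \<in> S \<and> (\<forall>j\<in>S. pos n s (first_choice n s S) \<le> pos n s j)"
proof -
  have fin: "finite S" using assms(1) finite_subset by blast
  obtain i where i: "i \<in> S" "\<forall>j\<in>S. pos n s i \<le> pos n s j"
    using ex_min_if_finite[of "pos n s ` S"] fin assms(3)
    by (metis arg_min_on_def arg_min_if_finite(1) arg_min_least)
  then have "first_choice n s S = i" using fc_eqI assms by blast
  then show ?thesis using i by simp
qed

lemma fc_self: "S \<subseteq> {1..n} \<Longrightarrow> s \<in> S \<Longrightarrow> first_choice n s S = s"
  by (rule fc_eqI) (auto simp: pos_def)

lemma pos_less:
  assumes "s \<in> {1..n}" "a' \<in> {1..n}" "a \<in> {1..n}" "a' < a" "\<not> (a' < s \<and> s \<le> a)"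
  shows "pos n s a' < pos n s a"
  using assms pos_eq[of s n a'] pos_eq[of s n a] by auto

lemma fc_prev:
  assumes "S \<subseteq> {1..n}" "s \<in> {1..n}" "a \<in> S" "a' \<in> S" "a' < a"
    and "first_choice n s S = a"
  shows "a' < s \<and> s \<le> a"
proof (rule ccontr)
  assume "\<not> (a' < s \<and> s \<le> a)"
  then have "pos n s a' < pos n s a" using pos_less assms by blast
  moreover have "pos n s a \<le> pos n s a'" using fc_props[of S n s] assms by auto
  ultimately show False by simp
qed

locale cfg = fixes n l :: nat
  assumes ev: "even n" and l2: "2 \<le> l" and ln: "2 * l < n"
begin

lemma nl: "2 * l + 2 \<le> n" using ev ln l2 by presburger

lemma A_mem: "x \<in> A1 n l \<longleftrightarrow> (1 \<le> x \<and> x \<le> l) \<or> (l + 2 \<le> x \<and> x \<le> n - l \<and> even (x - l))"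
proof
  assume "x \<in> A1 n l"
  then show "(1 \<le> x \<and> x \<le> l) \<or> (l + 2 \<le> x \<and> x \<le> n - l \<and> even (x - l))"
    unfolding A1_def using nl by auto
next
  assume h: "(1 \<le> x \<and> x \<le> l) \<or> (l + 2 \<le> x \<and> x \<le> n - l \<and> even (x - l))"
  show "x \<in> A1 n l"
  proof (cases "1 \<le> x \<and> x \<le> l")
    case True then show ?thesis unfolding A1_def by auto
  next
    case False
    then have h2: "l + 2 \<le> x \<and> x \<le> n - l \<and> even (x - l)" using h by blast
    define i where "i = (x - l) div 2"
    have "even (x - l)" using h2 by blast
    then have e: "2 * i = x - l" unfolding i_def by (rule dvd_mult_div_cancel)
    have "(2 * i) div 2 \<le> (n - 2 * l) div 2" by (rule div_le_mono) (use e h2 in linarith)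
    then have "x = l + 2 * i" "1 \<le> i" "i \<le> (n - 2 * l) div 2" using e h2 by linarith+
    then show ?thesis unfolding A1_def by blast
  qed
qed

lemma B_mem: "x \<in> B1 n l \<longleftrightarrow> 1 \<le> x \<and> x \<le> n \<and> x \<notin> A1 n l"
  unfolding B1_def by auto

lemma A_sub: "A1 n l \<subseteq> {1..n}"
proof
  fix x assume "x \<in> A1 n l"
  then have "(1 \<le> x \<and> x \<le> l) \<or> (l + 2 \<le> x \<and> x \<le> n - l)" using A_mem by blast
  then show "x \<in> {1..n}" using nl by auto
qed
lemma B_sub: "B1 n l \<subseteq> {1..n}" using B_mem by auto
lemma one_A: "1 \<in> A1 n l" using A_mem l2 by auto
lemma two_A: "2 \<in> A1 n l" using A_mem l2 by auto
lemma one_notB: "1 \<notin> B1 n l" using B_mem one_A by auto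
lemma l1_B: "l + 1 \<in> B1 n l" using B_mem A_mem nl by auto
lemma A_ne: "A1 n l \<noteq> {}" using one_A by auto
lemma B_ne: "B1 n l \<noteq> {}" using l1_B by auto
lemma top_B: "n - l < x \<Longrightarrow> x \<le> n \<Longrightarrow> x \<in> B1 n l" using B_mem A_mem nl by auto
lemma pair_sub: "{1, l + 1} \<subseteq> {1..n}" using nl by auto

lemma A_le: "x \<in> A1 n l \<Longrightarrow> 1 \<le> x \<and> x \<le> n - l"
proof -
  assume "x \<in> A1 n l"
  then have "(1 \<le> x \<and> x \<le> l) \<or> (l + 2 \<le> x \<and> x \<le> n - l)" using A_mem by blast
  then show ?thesis using nl by auto
qed

lemma nl_A: "n - l \<in> A1 n l"
proof -
  have "even (n - l - l)" using ev by (simp add: even_diff_nat)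
  moreover have "l + 2 \<le> n - l" using nl by linarith
  ultimately show ?thesis unfolding A_mem by blast
qed

lemma B_ge: "x \<in> B1 n l \<Longrightarrow> l + 1 \<le> x \<and> x \<le> n"
proof -
  assume x: "x \<in> B1 n l"
  then have "1 \<le> x" "x \<le> n" "x \<notin> A1 n l" unfolding B_mem by auto
  moreover have "\<not> (1 \<le> x \<and> x \<le> l)" using calculation(3) unfolding A_mem by blast
  ultimately show ?thesis by linarith
qed

lemma V1: assumes s: "s \<in> {1..n}"
  shows "first_choice n s (A1 n l) = 1 \<longleftrightarrow> s = 1 \<or> n - l < s"
proof
  assume h: "first_choice n s (A1 n l) = 1"
  show "s = 1 \<or> n - l < s"
  proof (rule ccontr)
    assume c: "\<not> (s = 1 \<or> n - l < s)"
    have "n - l \<in> A1 n l" by (rule nl_A)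
    then have "pos n s 1 \<le> pos n s (n - l)" using fc_props[OF A_sub s A_ne] h by auto
    moreover have "pos n s (n - l) < pos n s 1"
      using pos_eq[of s n 1] pos_eq[of s n "n - l"] s c nl by auto
    ultimately show False by simp
  qed
next
  assume h: "s = 1 \<or> n - l < s"
  show "first_choice n s (A1 n l) = 1"
  proof (rule fc_eqI[OF A_sub s one_A])
    fix j assume j: "j \<in> A1 n l"
    then have "1 \<le> j" "j \<le> n - l" using A_le by auto
    then show "pos n s 1 \<le> pos n s j"
      using pos_eq[of s n 1] pos_eq[of s n j] s h nl by auto
  qed
qed

lemma A_prev: assumes "a \<in> A1 n l" "a \<noteq> 1"
  shows "(a - 1 \<in> A1 n l \<and> 1 \<le> a - 1) \<or> (a - 2 \<in> A1 n l \<and> 1 \<le> a - 2)"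
proof -
  have h: "(1 \<le> a \<and> a \<le> l) \<or> (l + 2 \<le> a \<and> a \<le> n - l \<and> even (a - l))" using assms A_mem by blast
  show ?thesis
  proof (cases "a \<le> l")
    case True
    then have "1 \<le> a - 1 \<and> a - 1 \<le> l" using h assms(2) by linarith
    then show ?thesis using A_mem by blast
  next
    case False
    then have h2: "l + 2 \<le> a" "a \<le> n - l" "even (a - l)" using h by auto
    show ?thesis
    proof (cases "a = l + 2")
      case True
      then have "a - 2 = l" by simp
      then show ?thesis using A_mem l2 by auto
    next
      case False
      then have "l + 2 \<le> a - 2" using h2 by presburger
      moreover have "even (a - 2 - l)" using h2 by (simp add: even_diff_nat)
      moreover have "a - 2 \<le> n - l" using h2 by linarith
      ultimately have "a - 2 \<in> A1 n l" unfolding A_mem by blast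
      moreover have "1 \<le> a - 2" using h2 l2 by linarith
      ultimately show ?thesis by blast
    qed
  qed
qed

lemma V2: assumes s: "s \<in> {1..n}" and a: "a \<in> A1 n l" "a \<noteq> 1" and h: "first_choice n s (A1 n l) = a"
  shows "s = a \<or> s = a - 1"
proof -
  from A_prev[OF a] have "\<exists>a'. a' \<in> A1 n l \<and> a' < a \<and> a - 2 \<le> a'"
  proof
    assume h: "a - 1 \<in> A1 n l \<and> 1 \<le> a - 1"
    show ?thesis by (rule exI[of _ "a - 1"]) (use h in auto)
  next
    assume h: "a - 2 \<in> A1 n l \<and> 1 \<le> a - 2"
    show ?thesis by (rule exI[of _ "a - 2"]) (use h in auto)
  qed
  then obtain a' where a': "a' \<in> A1 n l" "a' < a" "a - 2 \<le> a'" by blast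
  then have "a' < s \<and> s \<le> a" using fc_prev[OF A_sub s a(1) a'(1) a'(2) h] by blast
  then show ?thesis using a' by linarith
qed

lemma V3: assumes s: "s \<in> {1..n}"
  shows "first_choice n s (B1 n l) = l + 1 \<longleftrightarrow> s \<le> l + 1"
proof
  assume h: "first_choice n s (B1 n l) = l + 1"
  show "s \<le> l + 1"
  proof (rule ccontr)
    assume c: "\<not> s \<le> l + 1"
    have "n \<in> B1 n l" using top_B[of n] l2 nl by simp
    then have "pos n s (l + 1) \<le> pos n s n" using fc_props[OF B_sub s B_ne] h by auto
    moreover have "pos n s n < pos n s (l + 1)"
      using pos_eq[of s n n] pos_eq[of s n "l + 1"] s c nl by auto
    ultimately show False by simp
  qed
next
  assume h: "s \<le> l + 1"
  show "first_choice n s (B1 n l) = l + 1"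
  proof (rule fc_eqI[OF B_sub s l1_B])
    fix j assume j: "j \<in> B1 n l"
    then have "l + 1 \<le> j" "j \<le> n" using B_ge by auto
    then show "pos n s (l + 1) \<le> pos n s j"
      using pos_eq[of s n "l + 1"] pos_eq[of s n j] s h nl by auto
  qed
qed

lemma odd_m1: "(x::nat) \<ge> 2 \<Longrightarrow> even x \<Longrightarrow> odd (x - 1)" by presburger
lemma odd_m2: "(x::nat) \<ge> 2 \<Longrightarrow> odd x \<Longrightarrow> odd (x - 2)" by presburger

lemma B_prev: assumes b: "b \<in> B1 n l" "b \<noteq> l + 1"
  shows "(b - 1 \<in> B1 n l \<and> 1 \<le> b - 1) \<or> (b - 2 \<in> B1 n l \<and> 1 \<le> b - 2)"
proof -
  have h: "1 \<le> b" "b \<le> n" "b \<notin> A1 n l" using b B_mem by auto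
  moreover have "\<not> (1 \<le> b \<and> b \<le> l)" using h(3) unfolding A_mem by blast
  ultimately have bl: "l + 1 \<le> b" by linarith
  then have bl2: "l + 2 \<le> b" using b(2) by linarith
  show ?thesis
  proof (cases "n - l + 1 < b")
    case True
    then have "b - 1 \<in> B1 n l" using top_B h by auto
    then show ?thesis using bl2 by auto
  next
    case nb: False
    show ?thesis
    proof (cases "b = n - l + 1")
      case True
      have "b - 2 \<notin> A1 n l"
      proof
        assume "b - 2 \<in> A1 n l"
        then have "(1 \<le> b - 2 \<and> b - 2 \<le> l) \<or> (l + 2 \<le> b - 2 \<and> b - 2 \<le> n - l \<and> even (b - 2 - l))"
          using A_mem by blast
        moreover have "\<not> (b - 2 \<le> l)" using True nl by linarith
        ultimately have e1: "even (b - 2 - l)" by blast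
        have e2: "b - 2 - l = n - 2 * l - 1" using True nl by simp
        have e3: "even (n - 2 * l)" using ev by simp
        have "n - 2 * l \<ge> 2" using nl by linarith
        then have "odd (n - 2 * l - 1)" using e3 by (rule odd_m1)
        moreover have "even (n - 2 * l - 1)" using e1 unfolding e2 .
        ultimately show False by blast
      qed
      then have "b - 2 \<in> B1 n l" using B_mem[of "b - 2"] True nl by simp
      then show ?thesis using bl2 l2 by auto
    next
      case False
      then have bb: "b \<le> n - l" using nb by linarith
      then have "odd (b - l)" using h(3) bl2 unfolding A_mem by blast
      moreover have "b - 2 - l = (b - l) - 2" by simp
      ultimately have o2: "odd (b - 2 - l)" using bl2 odd_m2[of "b - l"] by simp
      have bl3: "l + 3 \<le> b" using \<open>odd (b - l)\<close> bl2 by (cases "b = l + 2") auto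
      have "b - 2 \<notin> A1 n l"
      proof
        assume "b - 2 \<in> A1 n l"
        then have "(1 \<le> b - 2 \<and> b - 2 \<le> l) \<or> (l + 2 \<le> b - 2 \<and> b - 2 \<le> n - l \<and> even (b - 2 - l))"
          using A_mem by blast
        then show False using o2 bl3 by linarith
      qed
      moreover have "1 \<le> b - 2" "b - 2 \<le> n" using bl2 l2 bb by linarith+
      ultimately have "b - 2 \<in> B1 n l" using B_mem[of "b - 2"] by blast
      then show ?thesis using bl2 l2 by auto
    qed
  qed
qed

lemma V4: assumes s: "s \<in> {1..n}" and b: "b \<in> B1 n l" "b \<noteq> l + 1" and h: "first_choice n s (B1 n l) = b"
  shows "s = b \<or> s = b - 1"
proof -
  from B_prev[OF b] have "\<exists>a'. a' \<in> B1 n l \<and> a' < b \<and> b - 2 \<le> a'"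
  proof
    assume h: "b - 1 \<in> B1 n l \<and> 1 \<le> b - 1"
    show ?thesis by (rule exI[of _ "b - 1"]) (use h in auto)
  next
    assume h: "b - 2 \<in> B1 n l \<and> 1 \<le> b - 2"
    show ?thesis by (rule exI[of _ "b - 2"]) (use h in auto)
  qed
  then obtain a' where a': "a' \<in> B1 n l" "a' < b" "b - 2 \<le> a'" by blast
  then have "a' < s \<and> s \<le> b" using fc_prev[OF B_sub s b(1) a'(1) a'(2) h] by blast
  then show ?thesis using a' by linarith
qed

lemma V5: assumes s: "s \<in> {1..n}"
  shows "first_choice n s {1, l + 1} = (if 2 \<le> s \<and> s \<le> l + 1 then l + 1 else 1)"
proof (cases "2 \<le> s \<and> s \<le> l + 1")
  case True
  have "first_choice n s {1, l + 1} = l + 1"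
    by (rule fc_eqI[OF pair_sub s]) (use pos_eq[of s n 1] pos_eq[of s n "l + 1"] s nl True in auto)
  then show ?thesis using True by simp
next
  case False
  have "first_choice n s {1, l + 1} = 1"
    by (rule fc_eqI[OF pair_sub s]) (use pos_eq[of s n 1] pos_eq[of s n "l + 1"] s nl False in auto)
  then show ?thesis using False by simp
qed

end

definition cat :: "nat \<Rightarrow> nat \<Rightarrow> nat \<Rightarrow> nat" where
  "cat n l s = (if n - l < s then 1 else if 2 \<le> s \<and> s \<le> l + 1 then 2 else 0)"

definition cnt :: "nat \<Rightarrow> (nat \<Rightarrow> nat) \<Rightarrow> nat \<Rightarrow> nat" where
  "cnt m c v = card {j \<in> {..<m}. c j = v}"

definition Ev :: "nat \<Rightarrow> (nat \<Rightarrow> nat) \<Rightarrow> bool" where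
  "Ev m c \<longleftrightarrow> 2 \<le> cnt m c 1 \<and> 2 \<le> cnt m c 2 \<and> real (cnt m c 2) < real m / 2"

definition bad :: "nat \<Rightarrow> (nat \<Rightarrow> nat) \<Rightarrow> bool" where
  "bad m seed \<longleftrightarrow> (\<exists>j<m. seed j = 1) \<or> (\<exists>j<m. \<exists>j'<m. j \<noteq> j' \<and> seed j \<le> seed j' \<and> seed j' \<le> seed j + 1)"

lemma Xi_le: "Xi n m seed S i \<le> m"
proof -
  have "Xi n m seed S i \<le> card {..<m}" unfolding Xi_def by (rule card_mono) auto
  then show ?thesis by simp
qed

lemma Xi_pos: assumes "j < m" "first_choice n (seed j) S = i" shows "1 \<le> Xi n m seed S i"
proof -
  have "{j \<in> {..<m}. first_choice n (seed j) S = i} \<noteq> {}" using assms by auto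
  moreover have "finite {j \<in> {..<m}. first_choice n (seed j) S = i}" by simp
  ultimately have "0 < card {j \<in> {..<m}. first_choice n (seed j) S = i}" by (simp add: card_gt_0_iff)
  then show ?thesis unfolding Xi_def by simp
qed

lemma all_vote:
  assumes sd: "\<forall>j<m. seed j \<in> {1..n}" and S: "S \<subseteq> {1..n}" "x \<in> S"
    and z: "\<forall>y\<in>S-{x}. Xi n m seed S y = 0"
  shows "Xi n m seed S x = m"
proof -
  have "{j \<in> {..<m}. first_choice n (seed j) S = x} = {..<m}"
  proof safe
    fix j assume j: "j < m"
    let ?y = "first_choice n (seed j) S"
    have "?y \<in> S" using fc_props[OF S(1)] sd j S(2) by blast
    show "?y = x"
    proof (rule ccontr)
      assume "?y \<noteq> x"
      then have "Xi n m seed S ?y = 0" using z \<open>?y \<in> S\<close> by blast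
      moreover have "1 \<le> Xi n m seed S ?y" using Xi_pos[OF j] by blast
      ultimately show False by simp
    qed
  qed
  then show ?thesis unfolding Xi_def by simp
qed

lemma small_Xi:
  assumes nb: "\<not> bad m seed"
    and h: "\<And>j. j < m \<Longrightarrow> first_choice n (seed j) S = a \<Longrightarrow> seed j = a \<or> seed j = a - 1"
  shows "Xi n m seed S a \<le> 1"
proof -
  have "\<forall>x\<in>{j \<in> {..<m}. first_choice n (seed j) S = a}. \<forall>y\<in>{j \<in> {..<m}. first_choice n (seed j) S = a}. x = y"
  proof (intro ballI)
    fix x y assume x: "x \<in> {j \<in> {..<m}. first_choice n (seed j) S = a}" and y: "y \<in> {j \<in> {..<m}. first_choice n (seed j) S = a}"
    have x1: "seed x = a \<or> seed x = a - 1" "x < m" using h x by auto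
    have y1: "seed y = a \<or> seed y = a - 1" "y < m" using h y by auto
    show "x = y"
    proof (rule ccontr)
      assume ne: "x \<noteq> y"
      have "seed x \<le> seed y \<and> seed y \<le> seed x + 1 \<or> seed y \<le> seed x \<and> seed x \<le> seed y + 1"
        using x1 y1 by auto
      then show False using nb ne x1(2) y1(2) unfolding bad_def by metis
    qed
  qed
  then show ?thesis unfolding Xi_def One_nat_def by (subst card_le_Suc0_iff_eq) auto
qed

context cfg begin

lemma cat_lt: "s \<le> n \<Longrightarrow> cat n l s = 1 \<longleftrightarrow> n - l < s" unfolding cat_def by auto
lemma cat2: "cat n l s = 2 \<longleftrightarrow> 2 \<le> s \<and> s \<le> l + 1" unfolding cat_def using nl by auto

lemma main_equiv:
  assumes sd: "\<forall>j<m. seed j \<in> {1..n}" and nb: "\<not> bad m seed"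
  shows "wins_two_round n m seed (A1 n l) (B1 n l) 1 \<longleftrightarrow> Ev m (\<lambda>j. cat n l (seed j))"
proof -
  let ?A = "A1 n l" and ?B = "B1 n l" and ?c = "\<lambda>j. cat n l (seed j)"
  have s1: "\<forall>j<m. seed j \<noteq> 1" using nb unfolding bad_def by auto
  have XA1: "Xi n m seed ?A 1 = cnt m ?c 1"
    unfolding Xi_def cnt_def
  proof (rule arg_cong[where f = card], rule Collect_cong)
    fix j show "(j \<in> {..<m} \<and> first_choice n (seed j) ?A = 1) = (j \<in> {..<m} \<and> cat n l (seed j) = 1)"
      using V1[of "seed j"] sd s1 cat_lt[of "seed j"] by auto
  qed
  have XB: "Xi n m seed ?B (l + 1) = cnt m ?c 2"
    unfolding Xi_def cnt_def
  proof (rule arg_cong[where f = card], rule Collect_cong)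
    fix j show "(j \<in> {..<m} \<and> first_choice n (seed j) ?B = l + 1) = (j \<in> {..<m} \<and> cat n l (seed j) = 2)"
    proof (cases "j < m")
      case True
      then have "seed j \<in> {1..n}" "seed j \<noteq> 1" using sd s1 by auto
      then show ?thesis using V3[of "seed j"] cat2[of "seed j"] by auto
    qed simp
  qed
  have XP: "Xi n m seed {1, l + 1} (l + 1) = cnt m ?c 2"
    unfolding Xi_def cnt_def
  proof (rule arg_cong[where f = card], rule Collect_cong)
    fix j show "(j \<in> {..<m} \<and> first_choice n (seed j) {1, l + 1} = l + 1) = (j \<in> {..<m} \<and> cat n l (seed j) = 2)"
      using V5[of "seed j"] sd cat2[of "seed j"] l2 by (cases "j < m") auto
  qed
  have XP1: "Xi n m seed {1, l + 1} 1 = m - cnt m ?c 2"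
  proof -
    have "{j \<in> {..<m}. first_choice n (seed j) {1, l + 1} = 1} = {..<m} - {j \<in> {..<m}. first_choice n (seed j) {1, l + 1} = l + 1}"
      using V5 sd l2 by auto
    then have "Xi n m seed {1, l + 1} 1 = card ({..<m} - {j \<in> {..<m}. first_choice n (seed j) {1, l + 1} = l + 1})"
      unfolding Xi_def by simp
    also have "\<dots> = m - Xi n m seed {1, l + 1} (l + 1)"
      unfolding Xi_def by (subst card_Diff_subset) auto
    finally have "Xi n m seed {1, l + 1} 1 = m - Xi n m seed {1, l + 1} (l + 1)" .
    then show ?thesis using XP by simp
  qed
  have smA: "Xi n m seed ?A a \<le> 1" if "a \<in> ?A" "a \<noteq> 1" for a
    by (rule small_Xi[OF nb]) (use V2 sd that in blast)
  have smB: "Xi n m seed ?B b \<le> 1" if "b \<in> ?B" "b \<noteq> l + 1" for b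
    by (rule small_Xi[OF nb]) (use V4 sd that in blast)
  show ?thesis
  proof
    assume "Ev m ?c"
    then have e: "2 \<le> cnt m ?c 1" "2 \<le> cnt m ?c 2" "2 * cnt m ?c 2 < m" unfolding Ev_def by auto
    have wA: "wins_in n m seed ?A 1" unfolding wins_in_def using one_A smA XA1 e by fastforce
    have wB: "wins_in n m seed ?B (l + 1)" unfolding wins_in_def using l1_B smB XB e by fastforce
    show "wins_two_round n m seed ?A ?B 1" unfolding wins_two_round_def
      using wA wB XP XP1 e by (intro exI[of _ 1] exI[of _ "l + 1"]) auto
  next
    assume "wins_two_round n m seed ?A ?B 1"
    then obtain a b where wa: "wins_in n m seed ?A a" and wb: "wins_in n m seed ?B b"
      and d: "(1 = a \<and> Xi n m seed {a, b} b < Xi n m seed {a, b} a) \<or> (1 = b \<and> Xi n m seed {a, b} a < Xi n m seed {a, b} b)"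
      unfolding wins_two_round_def by blast
    have bB: "b \<in> ?B" using wb unfolding wins_in_def by blast
    then have a1: "a = 1" and fin: "Xi n m seed {1, b} b < Xi n m seed {1, b} 1" using d one_notB by auto
    have wA: "\<forall>a'\<in>?A - {1}. Xi n m seed ?A a' < Xi n m seed ?A 1" using wa a1 unfolding wins_in_def by blast
    have wB: "\<forall>a'\<in>?B - {b}. Xi n m seed ?B a' < Xi n m seed ?B b" using wb unfolding wins_in_def by blast
    have N1: "2 \<le> cnt m ?c 1"
    proof (rule ccontr)
      assume "\<not> 2 \<le> cnt m ?c 1"
      then have le1: "Xi n m seed ?A 1 \<le> 1" using XA1 by simp
      have "Xi n m seed ?A 1 = m"
      proof (rule all_vote[OF sd A_sub one_A], intro ballI)
        fix y assume "y \<in> ?A - {1}"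
        then have "Xi n m seed ?A y < Xi n m seed ?A 1" using wA by blast
        then show "Xi n m seed ?A y = 0" using le1 by linarith
      qed
      moreover have "Xi n m seed ?A 2 < Xi n m seed ?A 1" using wA two_A by auto
      ultimately have m1: "m = 1" using le1 by linarith
      then have "cnt m ?c 1 = 1" using XA1 \<open>Xi n m seed ?A 1 = m\<close> by simp
      then have "{j \<in> {..<m}. ?c j = 1} \<noteq> {}" unfolding cnt_def by (metis card.empty zero_neq_one)
      then have c0: "cat n l (seed 0) = 1" using m1 by auto
      let ?s = "seed 0"
      have s0: "?s \<in> {1..n}" using sd m1 by auto
      then have sgt: "n - l < ?s" using c0 cat_lt by auto
      then have sB: "?s \<in> ?B" using top_B s0 by auto
      have "first_choice n ?s ?B = ?s" by (rule fc_self[OF B_sub sB])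
      then have xs: "1 \<le> Xi n m seed ?B ?s" by (intro Xi_pos[of 0]) (use m1 in auto)
      have bs: "b = ?s"
      proof (rule ccontr)
        assume "b \<noteq> ?s"
        then have "Xi n m seed ?B ?s < Xi n m seed ?B b" using wB sB by auto
        moreover have "Xi n m seed ?B b \<le> m" by (rule Xi_le)
        ultimately show False using xs m1 by simp
      qed
      have "{1, ?s} \<subseteq> {1..n}" using s0 by auto
      then have "first_choice n ?s {1, ?s} = ?s" by (rule fc_self) auto
      then have "1 \<le> Xi n m seed {1, ?s} ?s" by (intro Xi_pos[of 0]) (use m1 in auto)
      moreover have "Xi n m seed {1, ?s} 1 \<le> m" by (rule Xi_le)
      ultimately show False using fin bs m1 by simp
    qed
    have m2: "2 \<le> m" using N1 XA1 Xi_le[of n m seed ?A 1] by simp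
    have bl: "b = l + 1"
    proof (rule ccontr)
      assume "b \<noteq> l + 1"
      then have le1: "Xi n m seed ?B b \<le> 1" using smB bB by blast
      have "Xi n m seed ?B b = m"
      proof (rule all_vote[OF sd B_sub bB], intro ballI)
        fix y assume "y \<in> ?B - {b}"
        then have "Xi n m seed ?B y < Xi n m seed ?B b" using wB by blast
        then show "Xi n m seed ?B y = 0" using le1 by linarith
      qed
      then show False using le1 m2 by simp
    qed
    have N2: "2 \<le> cnt m ?c 2"
    proof (rule ccontr)
      assume "\<not> 2 \<le> cnt m ?c 2"
      then have le1: "Xi n m seed ?B (l + 1) \<le> 1" using XB by simp
      have "Xi n m seed ?B (l + 1) = m"
      proof (rule all_vote[OF sd B_sub l1_B], intro ballI)
        fix y assume "y \<in> ?B - {l + 1}"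
        then have "Xi n m seed ?B y < Xi n m seed ?B (l + 1)" using wB bl by blast
        then show "Xi n m seed ?B y = 0" using le1 by linarith
      qed
      then show False using le1 m2 by simp
    qed
    have "cnt m ?c 2 < m - cnt m ?c 2" using fin bl XP XP1 by simp
    then have "real (cnt m ?c 2) < real m / 2" by linarith
    then show "Ev m ?c" unfolding Ev_def using N1 N2 by blast
  qed
qed

end

lemma count_gen:
  fixes f :: "'a \<Rightarrow> nat" and S :: "'a set" and m :: nat
  assumes S: "finite S" and V: "finite V" "f ` S \<subseteq> V"
    and P: "\<And>c c'. (\<And>j. j < m \<Longrightarrow> c j = c' j) \<Longrightarrow> P c = P c'"
  shows "card {x \<in> {..<m} \<rightarrow>\<^sub>E S. P (\<lambda>j. f (x j))}
       = (\<Sum>c \<in> {c \<in> {..<m} \<rightarrow>\<^sub>E V. P c}. \<Prod>j<m. card {s \<in> S. f s = c j})"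
proof -
  let ?G = "{c \<in> {..<m} \<rightarrow>\<^sub>E V. P c}"
  let ?box = "\<lambda>c. PiE {..<m} (\<lambda>j. {s \<in> S. f s = c j})"
  have eq: "{x \<in> {..<m} \<rightarrow>\<^sub>E S. P (\<lambda>j. f (x j))} = (\<Union>c\<in>?G. ?box c)"
  proof (intro equalityI subsetI)
    fix x assume "x \<in> {x \<in> {..<m} \<rightarrow>\<^sub>E S. P (\<lambda>j. f (x j))}"
    then have x: "x \<in> {..<m} \<rightarrow>\<^sub>E S" and px: "P (\<lambda>j. f (x j))" by auto
    let ?c = "restrict (\<lambda>j. f (x j)) {..<m}"
    have "P ?c = P (\<lambda>j. f (x j))" by (rule P) simp
    then have "P ?c" using px by blast
    moreover have "?c \<in> {..<m} \<rightarrow>\<^sub>E V" using x V by (auto simp: PiE_def Pi_def)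
    ultimately have "?c \<in> ?G" by blast
    moreover have "x \<in> ?box ?c" using x by (auto simp: PiE_def Pi_def)
    ultimately show "x \<in> (\<Union>c\<in>?G. ?box c)" by blast
  next
    fix x assume "x \<in> (\<Union>c\<in>?G. ?box c)"
    then obtain c where c: "c \<in> ?G" and x: "x \<in> ?box c" by blast
    have "x \<in> {..<m} \<rightarrow>\<^sub>E S" using x by (auto simp: PiE_def Pi_def)
    moreover have "P c" using c by blast
    moreover have cx: "\<And>j. j < m \<Longrightarrow> c j = f (x j)" using x by (auto simp: PiE_def Pi_def)
    have "P c = P (\<lambda>j. f (x j))" by (rule P) (rule cx)
    ultimately show "x \<in> {x \<in> {..<m} \<rightarrow>\<^sub>E S. P (\<lambda>j. f (x j))}" by blast
  qed
  have "card (\<Union>c\<in>?G. ?box c) = (\<Sum>c\<in>?G. card (?box c))"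
  proof (rule card_UN_disjoint)
    have "finite ({..<m} \<rightarrow>\<^sub>E V)" by (rule finite_PiE) (use V in auto)
    then show "finite ?G" by (rule finite_subset[rotated]) auto
    show "\<forall>c\<in>?G. finite (?box c)" using S by (intro ballI finite_PiE) auto
    show "\<forall>c\<in>?G. \<forall>c'\<in>?G. c \<noteq> c' \<longrightarrow> ?box c \<inter> ?box c' = {}"
    proof (intro ballI impI)
      fix c c' assume c: "c \<in> ?G" and c': "c' \<in> ?G" and ne: "c \<noteq> c'"
      obtain j where cj: "c j \<noteq> c' j" using ne by (meson ext)
      have "j < m"
      proof (rule ccontr)
        assume "\<not> j < m"
        then have "c j = undefined" "c' j = undefined" using c c' by (auto intro: PiE_arb)
        then show False using cj by simp
      qed
      note j = this cj
      show "?box c \<inter> ?box c' = {}"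
      proof (rule ccontr)
        assume "?box c \<inter> ?box c' \<noteq> {}"
        then obtain x where "x \<in> ?box c" "x \<in> ?box c'" by blast
        then have "f (x j) = c j" "f (x j) = c' j" using j by (auto simp: PiE_def Pi_def)
        then show False using j by simp
      qed
    qed
  qed
  also have "\<dots> = (\<Sum>c\<in>?G. \<Prod>j<m. card {s \<in> S. f s = c j})"
    by (rule sum.cong) (auto simp: card_PiE)
  finally show ?thesis using eq by simp
qed

lemma card_fix:
  fixes n m j' :: nat
  assumes j': "j' < m"
    and u: "\<And>x y. x \<in> {..<m} \<rightarrow>\<^sub>E {1..n} \<Longrightarrow> y \<in> {..<m} \<rightarrow>\<^sub>E {1..n} \<Longrightarrow> P x \<Longrightarrow> P y
            \<Longrightarrow> (\<And>i. i \<noteq> j' \<Longrightarrow> x i = y i) \<Longrightarrow> x j' = y j'"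
  shows "card {x \<in> {..<m} \<rightarrow>\<^sub>E {1..n}. P x} \<le> n ^ (m - 1)"
proof -
  let ?X = "{x \<in> {..<m} \<rightarrow>\<^sub>E {1..n}. P x}"
  have inj: "inj_on (\<lambda>x. x(j' := undefined)) ?X"
  proof (rule inj_onI)
    fix x y assume x: "x \<in> ?X" and y: "y \<in> ?X" and e: "x(j' := undefined) = y(j' := undefined)"
    have off: "\<And>i. i \<noteq> j' \<Longrightarrow> x i = y i" using e by (metis fun_upd_other)
    then have "x j' = y j'" using u x y by blast
    then show "x = y" using off by (metis ext)
  qed
  have img: "(\<lambda>x. x(j' := undefined)) ` ?X \<subseteq> ({..<m} - {j'}) \<rightarrow>\<^sub>E {1..n}"
    by (auto simp: PiE_def Pi_def extensional_def)
  have "card ?X \<le> card (({..<m} - {j'}) \<rightarrow>\<^sub>E {1..n})"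
    by (rule card_inj_on_le[OF inj img]) (auto intro: finite_PiE)
  also have "\<dots> = n ^ (m - 1)" using j' by (simp add: card_PiE)
  finally show ?thesis .
qed

lemma card_bad:
  fixes n m :: nat
  shows "card {x \<in> {..<m} \<rightarrow>\<^sub>E {1..n}. bad m x} \<le> (m + 2 * m * m) * n ^ (m - 1)"
proof -
  let ?O = "{..<m} \<rightarrow>\<^sub>E {1..n}"
  let ?U1 = "\<Union>j\<in>{..<m}. {x \<in> ?O. x j = 1}"
  let ?U2 = "\<Union>j\<in>{..<m}. \<Union>j'\<in>{..<m}. {x \<in> ?O. j \<noteq> j' \<and> x j' = x j} \<union> {x \<in> ?O. j \<noteq> j' \<and> x j' = x j + 1}"
  have sub: "{x \<in> ?O. bad m x} \<subseteq> ?U1 \<union> ?U2"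
  proof
    fix x assume "x \<in> {x \<in> ?O. bad m x}"
    then have xO: "x \<in> ?O" and bx: "bad m x" by auto
    from bx show "x \<in> ?U1 \<union> ?U2" unfolding bad_def
    proof (elim disjE exE conjE)
      fix j assume "j < m" "x j = 1"
      then have "x \<in> ?U1" using xO by blast
      then show ?thesis by blast
    next
      fix j j' assume j: "j < m" "j' < m" "j \<noteq> j'" "x j \<le> x j'" "x j' \<le> x j + 1"
      then have "x j' = x j \<or> x j' = x j + 1" by linarith
      then have "x \<in> {x \<in> ?O. j \<noteq> j' \<and> x j' = x j} \<union> {x \<in> ?O. j \<noteq> j' \<and> x j' = x j + 1}"
        using xO j(3) by blast
      then have "x \<in> ?U2" using j(1,2) by blast
      then show ?thesis by blast
    qed
  qed
  have c1: "card ?U1 \<le> m * n ^ (m - 1)"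
  proof -
    have "card ?U1 \<le> (\<Sum>j<m. card {x \<in> ?O. x j = 1})" by (rule card_UN_le) simp
    also have "\<dots> \<le> (\<Sum>j<m. n ^ (m - 1))"
      by (rule sum_mono, rule card_fix) auto
    finally show ?thesis by simp
  qed
  have c2: "card ?U2 \<le> 2 * m * m * n ^ (m - 1)"
  proof -
    have "card ?U2 \<le> (\<Sum>j<m. card (\<Union>j'\<in>{..<m}. {x \<in> ?O. j \<noteq> j' \<and> x j' = x j} \<union> {x \<in> ?O. j \<noteq> j' \<and> x j' = x j + 1}))"
      by (rule card_UN_le) simp
    also have "\<dots> \<le> (\<Sum>j<m. \<Sum>j'<m. card ({x \<in> ?O. j \<noteq> j' \<and> x j' = x j} \<union> {x \<in> ?O. j \<noteq> j' \<and> x j' = x j + 1}))"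
      by (rule sum_mono, rule card_UN_le) simp
    also have "\<dots> \<le> (\<Sum>j<m. \<Sum>j'<m. 2 * n ^ (m - 1))"
    proof (rule sum_mono, rule sum_mono)
      fix j j' assume j: "j \<in> {..<m}" and j': "j' \<in> {..<m}"
      have "card ({x \<in> ?O. j \<noteq> j' \<and> x j' = x j} \<union> {x \<in> ?O. j \<noteq> j' \<and> x j' = x j + 1})
            \<le> card {x \<in> ?O. j \<noteq> j' \<and> x j' = x j} + card {x \<in> ?O. j \<noteq> j' \<and> x j' = x j + 1}"
        by (rule card_Un_le)
      also have "\<dots> \<le> n ^ (m - 1) + n ^ (m - 1)"
        by (intro add_mono card_fix[of j']) (use j' in auto)
      finally show "card ({x \<in> ?O. j \<noteq> j' \<and> x j' = x j} \<union> {x \<in> ?O. j \<noteq> j' \<and> x j' = x j + 1}) \<le> 2 * n ^ (m - 1)" by simp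
    qed
    finally show ?thesis by simp
  qed
  have finO: "finite ?O" by (rule finite_PiE) auto
  have "?U1 \<union> ?U2 \<subseteq> ?O" by blast
  then have "finite (?U1 \<union> ?U2)" using finO finite_subset by blast
  then have "card {x \<in> ?O. bad m x} \<le> card (?U1 \<union> ?U2)"
    by (rule card_mono[OF _ sub])
  also have "\<dots> \<le> card ?U1 + card ?U2" by (rule card_Un_le)
  also have "\<dots> \<le> (m + 2 * m * m) * n ^ (m - 1)" using c1 c2 by (simp add: algebra_simps)
  finally show ?thesis .
qed

definition wt :: "real \<Rightarrow> nat \<Rightarrow> real" where
  "wt x v = (if v = 0 then 1 - 2 * x else x)"

definition F :: "nat \<Rightarrow> real \<Rightarrow> real" where
  "F m x = (\<Sum>c \<in> {c \<in> {..<m} \<rightarrow>\<^sub>E {0,1,2}. Ev m c}. \<Prod>j<m. wt x (c j))"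

lemma Ev_cong: "(\<And>j. j < m \<Longrightarrow> c j = c' j) \<Longrightarrow> Ev m c = Ev m c'"
proof -
  assume h: "\<And>j. j < m \<Longrightarrow> c j = c' j"
  have "\<And>v. cnt m c v = cnt m c' v" unfolding cnt_def using h
    by (intro arg_cong[where f = card] Collect_cong) auto
  then show ?thesis unfolding Ev_def by simp
qed

context cfg begin

lemma card_cat: "v \<in> {0,1,2} \<Longrightarrow> card {s \<in> {1..n}. cat n l s = v} = (if v = 0 then n - 2 * l else l)"
proof -
  assume v: "v \<in> {0,1,2}"
  have e1: "{s \<in> {1..n}. cat n l s = 1} = {n - l<..n}" unfolding cat_def using nl by auto
  have e2: "{s \<in> {1..n}. cat n l s = 2} = {2..l+1}" unfolding cat_def using nl by auto
  have e0: "{s \<in> {1..n}. cat n l s = 0} = {1} \<union> {l + 2..n - l}" unfolding cat_def using nl by auto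
  have c0: "card ({1} \<union> {l + 2..n - l}) = n - 2 * l"
    by (subst card_Un_disjoint) (use nl in auto)
  show ?thesis using v e0 e1 e2 c0 nl by auto
qed

lemma cardG:
  "real (card {seed \<in> {..<m} \<rightarrow>\<^sub>E {1..n}. Ev m (\<lambda>j. cat n l (seed j))}) / real n ^ m = F m (real l / real n)"
proof -
  have "card {seed \<in> {..<m} \<rightarrow>\<^sub>E {1..n}. Ev m (\<lambda>j. cat n l (seed j))}
      = (\<Sum>c \<in> {c \<in> {..<m} \<rightarrow>\<^sub>E {0,1,2}. Ev m c}. \<Prod>j<m. card {s \<in> {1..n}. cat n l s = c j})"
  proof (rule count_gen)
    show "cat n l ` {1..n} \<subseteq> {0, 1, 2}" unfolding cat_def by auto
    show "\<And>c c'. (\<And>j. j < m \<Longrightarrow> c j = c' j) \<Longrightarrow> Ev m c = Ev m c'" by (rule Ev_cong)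
  qed auto
  then have "real (card {seed \<in> {..<m} \<rightarrow>\<^sub>E {1..n}. Ev m (\<lambda>j. cat n l (seed j))}) / real n ^ m
      = (\<Sum>c \<in> {c \<in> {..<m} \<rightarrow>\<^sub>E {0,1,2}. Ev m c}. (\<Prod>j<m. real (card {s \<in> {1..n}. cat n l s = c j})) / (\<Prod>j<m. real n))"
    by (simp add: sum_divide_distrib)
  also have "\<dots> = F m (real l / real n)" unfolding F_def
  proof (rule sum.cong[OF refl])
    fix c assume c: "c \<in> {c \<in> {..<m} \<rightarrow>\<^sub>E {0,1,2}. Ev m c}"
    have "(\<Prod>j<m. real (card {s \<in> {1..n}. cat n l s = c j})) / (\<Prod>j<m. real n)
        = (\<Prod>j<m. real (card {s \<in> {1..n}. cat n l s = c j}) / real n)"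
      by (rule prod_dividef[symmetric])
    also have "\<dots> = (\<Prod>j<m. wt (real l / real n) (c j))"
    proof (rule prod.cong[OF refl])
      fix j assume "j \<in> {..<m}"
      moreover have "c \<in> {..<m} \<rightarrow>\<^sub>E {0,1,2}" using c by blast
      ultimately have cj: "c j \<in> {0,1,2}" using PiE_mem by metis
      have n0: "real n > 0" using nl by simp
      show "real (card {s \<in> {1..n}. cat n l s = c j}) / real n = wt (real l / real n) (c j)"
      proof -
        have "real (card {s \<in> {1..n}. cat n l s = c j}) = (if c j = 0 then real n - 2 * real l else real l)"
          using card_cat[OF cj] nl by (simp add: of_nat_diff)
        then show ?thesis unfolding wt_def using n0 by (simp add: diff_divide_distrib)
      qed
    qed
    finally show "(\<Prod>j<m. real (card {s \<in> {1..n}. cat n l s = c j})) / (\<Prod>j<m. real n)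
        = (\<Prod>j<m. wt (real l / real n) (c j))" .
  qed
  finally show ?thesis .
qed

lemma p1_close: "\<bar>p1 n m l - F m (real l / real n)\<bar> \<le> real (m + 2 * m * m) / real n"
proof -
  let ?O = "{..<m} \<rightarrow>\<^sub>E {1..n}"
  let ?W = "{seed \<in> ?O. wins_two_round n m seed (A1 n l) (B1 n l) 1}"
  let ?G = "{seed \<in> ?O. Ev m (\<lambda>j. cat n l (seed j))}"
  let ?D = "{seed \<in> ?O. bad m seed}"
  have finO: "finite ?O" by (rule finite_PiE) auto
  have eq: "?W - ?D = ?G - ?D"
  proof (intro set_eqI iffI)
    fix x assume "x \<in> ?W - ?D"
    then have "x \<in> ?O" "\<not> bad m x" "wins_two_round n m x (A1 n l) (B1 n l) 1" by blast+
    moreover have "\<forall>j<m. x j \<in> {1..n}" using PiE_mem[OF calculation(1)] by simp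
    ultimately show "x \<in> ?G - ?D" using main_equiv by blast
  next
    fix x assume "x \<in> ?G - ?D"
    then have "x \<in> ?O" "\<not> bad m x" "Ev m (\<lambda>j. cat n l (x j))" by blast+
    moreover have "\<forall>j<m. x j \<in> {1..n}" using PiE_mem[OF calculation(1)] by simp
    ultimately show "x \<in> ?W - ?D" using main_equiv by blast
  qed
  have finW: "finite ?W" "finite ?G" "finite ?D" by (rule finite_subset[OF _ finO], blast)+
  have "card ?W \<le> card ((?W - ?D) \<union> ?D)" by (intro card_mono finite_UnI finite_Diff finW) blast
  also have "\<dots> \<le> card (?W - ?D) + card ?D" by (rule card_Un_le)
  also have "\<dots> \<le> card ?G + card ?D" using eq card_mono[OF finW(2) Diff_subset[of ?G ?D]] by simp
  finally have w1: "card ?W \<le> card ?G + card ?D" .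
  have "card ?G \<le> card ((?G - ?D) \<union> ?D)" by (intro card_mono finite_UnI finite_Diff finW) blast
  also have "\<dots> \<le> card (?G - ?D) + card ?D" by (rule card_Un_le)
  also have "\<dots> \<le> card ?W + card ?D" using eq card_mono[OF finW(1) Diff_subset[of ?W ?D]] by simp
  finally have w2: "card ?G \<le> card ?W + card ?D" .
  have n0: "real n > 0" using nl by simp
  have dist: "\<bar>real (card ?W) - real (card ?G)\<bar> \<le> real (card ?D)" using w1 w2 by linarith
  have dB: "real (card ?D) / real n ^ m \<le> real (m + 2 * m * m) / real n"
  proof (cases "m = 0")
    case True
    have "\<And>x. \<not> bad 0 x" unfolding bad_def by simp
    then have "?D = {}" using True by simp
    then have "card ?D = 0" by (metis card.empty)
    then show ?thesis by simp
  next
    case False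
    have "real (card ?D) \<le> real ((m + 2 * m * m) * n ^ (m - 1))" using card_bad[of m n] by linarith
    also have "\<dots> = real (m + 2 * m * m) * real n ^ (m - 1)" by simp
    finally have "real (card ?D) / real n ^ m \<le> real (m + 2 * m * m) * real n ^ (m - 1) / real n ^ m"
      using n0 by (simp add: divide_right_mono)
    also have "\<dots> = real (m + 2 * m * m) / real n"
    proof -
      have pw: "real n ^ m = real n ^ (m - 1) * real n" using False by (metis power_minus_mult not_gr0)
      have "real n ^ (m - 1) > 0" using n0 by simp
      then show ?thesis unfolding pw using n0 by simp
    qed
    finally show ?thesis .
  qed
  have "p1 n m l - F m (real l / real n) = (real (card ?W) - real (card ?G)) / real n ^ m"
    unfolding p1_def cardG[symmetric] by (simp add: diff_divide_distrib)
  then have "\<bar>p1 n m l - F m (real l / real n)\<bar> = \<bar>real (card ?W) - real (card ?G)\<bar> / real n ^ m"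
    using n0 by simp
  also have "\<dots> \<le> real (card ?D) / real n ^ m" using dist n0 by (simp add: divide_right_mono)
  finally show ?thesis using dB by linarith
qed

end

definition catc :: "real \<Rightarrow> real \<Rightarrow> nat" where
  "catc \<eta> u = (if 1 - \<eta> < u \<and> u < 1 then 1 else if 0 < u \<and> u < \<eta> then 2 else 0)"

lemma decomp:
  fixes f :: "'a \<Rightarrow> nat" and S :: "'a set" and m :: nat
  assumes V: "f ` S \<subseteq> V"
    and P: "\<And>c c'. (\<And>j. j < m \<Longrightarrow> c j = c' j) \<Longrightarrow> P c = P c'"
  shows "{x \<in> {..<m} \<rightarrow>\<^sub>E S. P (\<lambda>j. f (x j))} = (\<Union>c\<in>{c \<in> {..<m} \<rightarrow>\<^sub>E V. P c}. PiE {..<m} (\<lambda>j. {s \<in> S. f s = c j}))"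
proof (intro equalityI subsetI)
  let ?G = "{c \<in> {..<m} \<rightarrow>\<^sub>E V. P c}"
  let ?box = "\<lambda>c. PiE {..<m} (\<lambda>j. {s \<in> S. f s = c j})"
  fix x assume "x \<in> {x \<in> {..<m} \<rightarrow>\<^sub>E S. P (\<lambda>j. f (x j))}"
  then have x: "x \<in> {..<m} \<rightarrow>\<^sub>E S" and px: "P (\<lambda>j. f (x j))" by auto
  let ?c = "restrict (\<lambda>j. f (x j)) {..<m}"
  have "P ?c = P (\<lambda>j. f (x j))" by (rule P) simp
  then have "P ?c" using px by blast
  moreover have "?c \<in> {..<m} \<rightarrow>\<^sub>E V" using x V by (auto simp: PiE_def Pi_def)
  ultimately have "?c \<in> ?G" by blast
  moreover have "x \<in> ?box ?c" using x by (auto simp: PiE_def Pi_def)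
  ultimately show "x \<in> (\<Union>c\<in>?G. ?box c)" by blast
next
  let ?G = "{c \<in> {..<m} \<rightarrow>\<^sub>E V. P c}"
  let ?box = "\<lambda>c. PiE {..<m} (\<lambda>j. {s \<in> S. f s = c j})"
  fix x assume "x \<in> (\<Union>c\<in>?G. ?box c)"
  then obtain c where c: "c \<in> ?G" and x: "x \<in> ?box c" by blast
  have "x \<in> {..<m} \<rightarrow>\<^sub>E S" using x by (auto simp: PiE_def Pi_def)
  moreover have "P c" using c by blast
  moreover have cx: "\<And>j. j < m \<Longrightarrow> c j = f (x j)" using x by (auto simp: PiE_def Pi_def)
  have "P c = P (\<lambda>j. f (x j))" by (rule P) (rule cx)
  ultimately show "x \<in> {x \<in> {..<m} \<rightarrow>\<^sub>E S. P (\<lambda>j. f (x j))}" by blast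
qed

lemma disj_boxes:
  fixes f :: "'a \<Rightarrow> nat" and S :: "'a set" and m :: nat
  shows "disjoint_family_on (\<lambda>c. PiE {..<m} (\<lambda>j. {s \<in> S. f s = c j})) {c \<in> {..<m} \<rightarrow>\<^sub>E V. P c}"
  unfolding disjoint_family_on_def
proof (intro ballI impI)
  let ?G = "{c \<in> {..<m} \<rightarrow>\<^sub>E V. P c}"
  let ?box = "\<lambda>c. PiE {..<m} (\<lambda>j. {s \<in> S. f s = c j})"
  fix c c' assume c: "c \<in> ?G" and c': "c' \<in> ?G" and ne: "c \<noteq> c'"
  obtain j where cj: "c j \<noteq> c' j" using ne by (meson ext)
  have "j < m"
  proof (rule ccontr)
    assume "\<not> j < m"
    then have "c j = undefined" "c' j = undefined" using c c' by (auto intro: PiE_arb)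
    then show False using cj by simp
  qed
  note j = this cj
  show "?box c \<inter> ?box c' = {}"
  proof (rule ccontr)
    assume "?box c \<inter> ?box c' \<noteq> {}"
    then obtain x where "x \<in> ?box c" "x \<in> ?box c'" by blast
    then have "f (x j) = c j" "f (x j) = c' j" using j by (auto simp: PiE_def Pi_def)
    then show False using j by simp
  qed
qed

lemma mu_prob: "prob_space (uniform_measure lborel {0..<1::real})"
  by (rule prob_space_uniform_measure) auto

lemma catc_sets: "{u. catc \<eta> u = v} \<in> sets lborel"
proof -
  have "{u. catc \<eta> u = v} = (if v = 1 then {1 - \<eta><..<1} else if v = 2 then {0<..<\<eta>} - {1 - \<eta><..<1}
          else if v = 0 then UNIV - {1 - \<eta><..<1} - {0<..<\<eta>} else {})"
    unfolding catc_def by auto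
  then show ?thesis by simp
qed

lemma catc_sets_b: "{u. catc \<eta> u = v} \<in> sets borel"
  using catc_sets by simp

lemma measure_catc:
  assumes eta: "0 < \<eta>" "\<eta> < 1 / 2" and v: "v \<in> {0,1,2}"
  shows "measure (uniform_measure lborel {0..<1::real}) {u. catc \<eta> u = v} = wt \<eta> v"
proof -
  let ?mu = "uniform_measure lborel {0..<1::real}"
  interpret mu: prob_space ?mu by (rule mu_prob)
  have m: "measure ?mu A = measure lborel ({0..<1} \<inter> A)" if "A \<in> sets lborel" for A
    using that by (subst measure_uniform_measure) auto
  have m1: "measure ?mu {u. catc \<eta> u = 1} = \<eta>"
  proof -
    have "{0..<1} \<inter> {u. catc \<eta> u = 1} = {1 - \<eta><..<1}" unfolding catc_def using eta by auto
    then show ?thesis using m[OF catc_sets[of \<eta> 1]] eta by simp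
  qed
  have m2: "measure ?mu {u. catc \<eta> u = 2} = \<eta>"
  proof -
    have "{0..<1} \<inter> {u. catc \<eta> u = 2} = {0<..<\<eta>}" unfolding catc_def using eta by auto
    then show ?thesis using m[OF catc_sets[of \<eta> 2]] eta by simp
  qed
  have "measure ?mu (\<Union>v\<in>{0,1,2}. {u. catc \<eta> u = v}) = (\<Sum>v\<in>{0,1,2}. measure ?mu {u. catc \<eta> u = v})"
    by (rule mu.finite_measure_finite_Union) (auto simp: disjoint_family_on_def catc_sets_b)
  moreover have "(\<Union>v\<in>{0::nat,1,2}. {u. catc \<eta> u = v}) = space ?mu" unfolding catc_def by auto
  ultimately have "1 = measure ?mu {u. catc \<eta> u = 0} + \<eta> + \<eta>" using m1 m2 mu.prob_space by simp
  then have m0: "measure ?mu {u. catc \<eta> u = 0} = 1 - 2 * \<eta>" by simp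
  show ?thesis using v m0 m1 m2 unfolding wt_def by auto
qed

lemma p_inf_F:
  assumes eta: "0 < \<eta>" "\<eta> < 1 / 2"
  shows "p_inf m \<eta> = F m \<eta>"
proof -
  let ?mu = "uniform_measure lborel {0..<1::real}"
  let ?M = "unif_cube m"
  let ?G = "{c \<in> {..<m} \<rightarrow>\<^sub>E {0,1,2}. Ev m c}"
  let ?box = "\<lambda>c. PiE {..<m} (\<lambda>j. {s \<in> UNIV. catc \<eta> s = c j})"
  interpret P: product_prob_space "\<lambda>_. ?mu" "{..<m}"
    by (rule product_prob_spaceI) (rule mu_prob)
  have M: "?M = PiM {..<m} (\<lambda>_. ?mu)" unfolding unif_cube_def ..
  have sp: "space ?M = {..<m} \<rightarrow>\<^sub>E UNIV" unfolding M space_PiM by simp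
  have catc1: "catc \<eta> u = 1 \<longleftrightarrow> u \<in> {1 - \<eta><..<1}" for u unfolding catc_def by auto
  have catc2: "catc \<eta> u = 2 \<longleftrightarrow> u \<in> {0<..<\<eta>}" for u unfolding catc_def using eta by auto
  have NA1: "N_arc m (1 - \<eta>) 1 U = cnt m (\<lambda>j. catc \<eta> (U j)) 1" for U
    unfolding N_arc_def cnt_def using catc1 by presburger
  have NA2: "N_arc m 0 \<eta> U = cnt m (\<lambda>j. catc \<eta> (U j)) 2" for U
    unfolding N_arc_def cnt_def using catc2 by presburger
  have "p_inf m \<eta> = measure ?M {U \<in> space ?M. Ev m (\<lambda>j. catc \<eta> (U j))}"
    unfolding p_inf_def Ev_def NA1 NA2 ..
  also have "{U \<in> space ?M. Ev m (\<lambda>j. catc \<eta> (U j))} = (\<Union>c\<in>?G. ?box c)"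
    unfolding sp
  proof (rule decomp)
    show "catc \<eta> ` UNIV \<subseteq> {0, 1, 2}" unfolding catc_def by auto
    show "\<And>c c'. (\<And>j. j < m \<Longrightarrow> c j = c' j) \<Longrightarrow> Ev m c = Ev m c'" by (rule Ev_cong)
  qed
  also have "measure ?M (\<Union>c\<in>?G. ?box c) = (\<Sum>c\<in>?G. measure ?M (?box c))"
  proof (unfold M, rule P.finite_measure_finite_Union)
    have "finite ({..<m} \<rightarrow>\<^sub>E {0::nat,1,2})" by (rule finite_PiE) auto
    then show "finite ?G" by (rule finite_subset[rotated]) blast
    show "?box ` ?G \<subseteq> sets (PiM {..<m} (\<lambda>_. ?mu))"
    proof (rule image_subsetI, rule sets_PiM_I_finite)
      show "finite {..<m}" by simp
      fix c j assume "j \<in> {..<m}"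
      show "{s \<in> UNIV. catc \<eta> s = c j} \<in> sets ?mu" using catc_sets_b by simp
    qed
    show "disjoint_family_on ?box ?G" by (rule disj_boxes)
  qed
  also have "\<dots> = F m \<eta>" unfolding F_def
  proof (rule sum.cong[OF refl])
    fix c assume c: "c \<in> ?G"
    have cj: "c j \<in> {0,1,2}" if "j < m" for j
    proof -
      have "c \<in> {..<m} \<rightarrow>\<^sub>E {0,1,2}" using c by blast
      then show ?thesis using that PiE_mem by (metis lessThan_iff)
    qed
    have "emeasure ?M (?box c) = (\<Prod>j<m. emeasure ?mu {s \<in> UNIV. catc \<eta> s = c j})"
      unfolding M by (rule P.emeasure_PiM) (auto simp: catc_sets_b)
    also have "\<dots> = (\<Prod>j<m. ennreal (wt \<eta> (c j)))"
    proof (rule prod.cong[OF refl])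
      fix j assume "j \<in> {..<m}"
      then have "measure ?mu {u. catc \<eta> u = c j} = wt \<eta> (c j)" using measure_catc[OF eta cj] by simp
      then show "emeasure ?mu {s \<in> UNIV. catc \<eta> s = c j} = ennreal (wt \<eta> (c j))"
        using P.M.emeasure_eq_measure by simp
    qed
    also have "\<dots> = ennreal (\<Prod>j<m. wt \<eta> (c j))"
      by (rule prod_ennreal) (use eta in \<open>auto simp: wt_def\<close>)
    finally have "emeasure ?M (?box c) = ennreal (\<Prod>j<m. wt \<eta> (c j))" .
    moreover have "(\<Prod>j<m. wt \<eta> (c j)) \<ge> 0" using eta by (intro prod_nonneg) (auto simp: wt_def)
    ultimately show "measure ?M (?box c) = (\<Prod>j<m. wt \<eta> (c j))"
      unfolding measure_def by simp
  qed
  finally show ?thesis .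
qed

lemma sum_PiE_pow:
  fixes g :: "nat \<Rightarrow> real" and m :: nat
  assumes "finite V"
  shows "(\<Sum>c\<in>{..<m} \<rightarrow>\<^sub>E V. \<Prod>j<m. g (c j)) = (\<Sum>v\<in>V. g v) ^ m"
proof -
  have "(\<Prod>j<m. \<Sum>v\<in>V. g v) = (\<Sum>c\<in>PiE {..<m} (\<lambda>_. V). \<Prod>j<m. g (c j))"
    by (rule prod_sum_PiE) (use assms in auto)
  then show ?thesis by simp
qed

lemma prod_if_cnt: "(\<Prod>j<m. if c j = v then (a::real) else 1) = a ^ cnt m c v"
proof -
  have "(\<Prod>j<m. if c j = v then a else 1) = (\<Prod>j\<in>{..<m} \<inter> {j. c j = v}. a) * (\<Prod>j\<in>{..<m} \<inter> - {j. c j = v}. 1)"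
    by (rule prod.If_cases) simp
  also have "\<dots> = a ^ card ({..<m} \<inter> {j. c j = v})" by simp
  also have "{..<m} \<inter> {j. c j = v} = {j \<in> {..<m}. c j = v}" by blast
  finally show ?thesis unfolding cnt_def .
qed

lemma wt_nonneg: "0 \<le> x \<Longrightarrow> x \<le> 1 / 2 \<Longrightarrow> 0 \<le> wt x v" unfolding wt_def by auto

lemma total_one: fixes m :: nat shows "0 \<le> x \<Longrightarrow> x \<le> 1 / 2 \<Longrightarrow> (\<Sum>c\<in>{..<m} \<rightarrow>\<^sub>E {0::nat,1,2}. \<Prod>j<m. wt x (c j)) = 1"
  by (subst sum_PiE_pow) (auto simp: wt_def)

lemma F_le1:
  fixes m :: nat
  assumes "0 \<le> x" "x \<le> 1 / 2"
  shows "F m x \<le> 1"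
proof -
  have "F m x \<le> (\<Sum>c\<in>{..<m} \<rightarrow>\<^sub>E {0::nat,1,2}. \<Prod>j<m. wt x (c j))"
    unfolding F_def
  proof (rule sum_mono2)
    show "finite ({..<m} \<rightarrow>\<^sub>E {0::nat,1,2})" by (rule finite_PiE) auto
    show "{c \<in> {..<m} \<rightarrow>\<^sub>E {0, 1, 2}. Ev m c} \<subseteq> {..<m} \<rightarrow>\<^sub>E {0, 1, 2}" by blast
    show "\<And>c. 0 \<le> (\<Prod>j<m. wt x (c j))" using assms by (intro prod_nonneg wt_nonneg) auto
  qed
  then show ?thesis using total_one[OF assms] by simp
qed

lemma F_lower:
  fixes x s t :: real and m :: nat
  assumes x: "0 \<le> x" "x \<le> 1 / 2" and s: "0 < s" "s \<le> 1" and t: "1 \<le> t"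
  shows "1 - F m x \<le> 2 * (1 - x + x * s) ^ m / s + ((1 - x + x * t\<^sup>2) / t) ^ m"
proof -
  let ?P = "{..<m} \<rightarrow>\<^sub>E {0::nat,1,2}"
  let ?G = "{c \<in> ?P. Ev m c}"
  let ?w = "\<lambda>c::nat\<Rightarrow>nat. \<Prod>j<m. wt x (c j)"
  let ?h1 = "\<lambda>c::nat\<Rightarrow>nat. \<Prod>j<m. if c j = 1 then s else 1"
  let ?h2 = "\<lambda>c::nat\<Rightarrow>nat. \<Prod>j<m. if c j = 2 then s else 1"
  let ?h3 = "\<lambda>c::nat\<Rightarrow>nat. \<Prod>j<m. if c j = 2 then t\<^sup>2 else 1"
  let ?B = "\<lambda>c::nat\<Rightarrow>nat. ?h1 c / s + ?h2 c / s + ?h3 c / t ^ m"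
  have finP: "finite ?P" by (rule finite_PiE) auto
  have w0: "\<And>c. 0 \<le> ?w c" using x by (intro prod_nonneg wt_nonneg) auto
  have t0: "0 < t" using t by simp
  have B0: "\<And>c. 0 \<le> ?B c" using s t0 by (intro add_nonneg_nonneg divide_nonneg_pos prod_nonneg) auto
  have B1: "1 \<le> ?B c" if "\<not> Ev m c" for c
  proof -
    have h1: "?h1 c = s ^ cnt m c 1" by (rule prod_if_cnt)
    have h2: "?h2 c = s ^ cnt m c 2" by (rule prod_if_cnt)
    have h3: "?h3 c = (t\<^sup>2) ^ cnt m c 2" by (rule prod_if_cnt)
    have nn: "0 \<le> ?h1 c / s" "0 \<le> ?h2 c / s" "0 \<le> ?h3 c / t ^ m"
      using s t0 by (auto intro!: divide_nonneg_pos prod_nonneg)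
    from that have "cnt m c 1 \<le> 1 \<or> cnt m c 2 \<le> 1 \<or> m \<le> 2 * cnt m c 2" unfolding Ev_def by linarith
    then show ?thesis
    proof (elim disjE)
      assume "cnt m c 1 \<le> 1"
      then have "s ^ 1 \<le> s ^ cnt m c 1" using s by (intro power_decreasing) auto
      then have "1 \<le> ?h1 c / s" using s h1 by simp
      then show ?thesis using nn by linarith
    next
      assume "cnt m c 2 \<le> 1"
      then have "s ^ 1 \<le> s ^ cnt m c 2" using s by (intro power_decreasing) auto
      then have "1 \<le> ?h2 c / s" using s h2 by simp
      then show ?thesis using nn by linarith
    next
      assume "m \<le> 2 * cnt m c 2"
      then have "t ^ m \<le> t ^ (2 * cnt m c 2)" using t by (intro power_increasing) auto
      also have "\<dots> = (t\<^sup>2) ^ cnt m c 2" by (simp add: power_mult)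
      finally have "1 \<le> ?h3 c / t ^ m" using t0 h3 by simp
      then show ?thesis using nn by linarith
    qed
  qed
  have E: "(\<Sum>c\<in>?P. ?w c * (\<Prod>j<m. if c j = v then a else 1)) = (1 - x + x * a) ^ m"
    if v: "v \<in> {1,2}" for v :: nat and a :: real
  proof -
    have "(\<Sum>c\<in>?P. ?w c * (\<Prod>j<m. if c j = v then a else 1))
        = (\<Sum>c\<in>?P. \<Prod>j<m. wt x (c j) * (if c j = v then a else 1))"
      by (simp add: prod.distrib)
    also have "\<dots> = (\<Sum>u\<in>{0::nat,1,2}. wt x u * (if u = v then a else 1)) ^ m"
      by (rule sum_PiE_pow) simp
    also have "(\<Sum>u\<in>{0::nat,1,2}. wt x u * (if u = v then a else 1)) = 1 - x + x * a"
      using v by (auto simp: wt_def)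
    finally show ?thesis .
  qed
  have "1 - F m x = (\<Sum>c\<in>?P. ?w c) - (\<Sum>c\<in>?G. ?w c)" unfolding F_def using total_one[OF x] by simp
  also have "\<dots> = (\<Sum>c\<in>?P - ?G. ?w c)" by (rule sum_diff[symmetric, OF finP]) blast
  also have "\<dots> \<le> (\<Sum>c\<in>?P - ?G. ?w c * ?B c)"
  proof (rule sum_mono)
    fix c assume "c \<in> ?P - ?G"
    then have "\<not> Ev m c" by blast
    then have "1 \<le> ?B c" by (rule B1)
    from mult_left_mono[OF this w0[of c]] show "?w c \<le> ?w c * ?B c" by simp
  qed
  also have "\<dots> \<le> (\<Sum>c\<in>?P. ?w c * ?B c)"
  proof (rule sum_mono2[OF finP])
    show "?P - ?G \<subseteq> ?P" by blast
    fix c show "0 \<le> ?w c * ?B c" using w0[of c] B0[of c] by (rule mult_nonneg_nonneg)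
  qed
  also have "\<dots> = (\<Sum>c\<in>?P. ?w c * ?h1 c) / s + (\<Sum>c\<in>?P. ?w c * ?h2 c) / s + (\<Sum>c\<in>?P. ?w c * ?h3 c) / t ^ m"
    by (simp add: distrib_left sum.distrib sum_divide_distrib times_divide_eq_right)
  also have "\<dots> = (1 - x + x * s) ^ m / s + (1 - x + x * s) ^ m / s + (1 - x + x * t\<^sup>2) ^ m / t ^ m"
    using E[of 1 s] E[of 2 s] E[of 2 "t\<^sup>2"] by simp
  also have "\<dots> = 2 * (1 - x + x * s) ^ m / s + ((1 - x + x * t\<^sup>2) / t) ^ m"
    by (simp add: power_divide)
  finally show ?thesis .
qed

lemma F_cont:
  fixes x :: "'b \<Rightarrow> real"
  assumes "(x \<longlongrightarrow> \<eta>) G"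
  shows "((\<lambda>k. F m (x k)) \<longlongrightarrow> F m \<eta>) G"
  unfolding F_def
proof (intro tendsto_sum tendsto_prod)
  fix c :: "nat \<Rightarrow> nat" and j :: nat
  show "((\<lambda>k. wt (x k) (c j)) \<longlongrightarrow> wt \<eta> (c j)) G"
    unfolding wt_def by (cases "c j = 0") (auto intro!: tendsto_intros assms)
qed

lemma F_to_one:
  fixes mm :: "nat \<Rightarrow> nat" and x :: "nat \<Rightarrow> real"
  assumes eta: "0 < \<eta>" "\<eta> < 1 / 2" and mm: "filterlim mm at_top sequentially"
    and x: "x \<longlonglongrightarrow> \<eta>"
  shows "(\<lambda>k. F (mm k) (x k)) \<longlonglongrightarrow> 1"
proof -
  define e where "e = (2 * \<eta> + 1) / 4"
  define t where "t = 1 / (2 * e)"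
  define \<rho> where "\<rho> = (1 - e + e * t\<^sup>2) / t"
  define q where "q = 1 - \<eta> / 4"
  have e: "\<eta> < e" "e < 1 / 2" "0 < e" using eta by (auto simp: e_def)
  have t1: "1 < t" using e by (simp add: t_def field_simps)
  have rho1: "\<rho> < 1"
  proof -
    have sq: "(2 * e - 1)\<^sup>2 > 0" using e by simp
    have a: "4 * e * (1 - e + e * t\<^sup>2) = 4 * e - 4 * e\<^sup>2 + 1"
      using e by (simp add: t_def field_simps power2_eq_square)
    have b: "4 * e * t = 2" using e by (simp add: t_def)
    have "4 * e * (1 - e + e * t\<^sup>2) < 4 * e * t" unfolding a b using sq by (simp add: power2_eq_square algebra_simps)
    then have "1 - e + e * t\<^sup>2 < t" using e by simp
    then show ?thesis unfolding \<rho>_def using t1 by simp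
  qed
  have "0 \<le> e * t\<^sup>2" using e by simp
  then have rho0: "0 \<le> \<rho>" unfolding \<rho>_def using e t1 by (intro divide_nonneg_pos) linarith+
  have q: "0 \<le> q" "q < 1" using eta by (auto simp: q_def)
  have ev: "eventually (\<lambda>k. \<eta> / 2 < x k \<and> x k < e) sequentially"
    using order_tendstoD(1)[OF x, of "\<eta> / 2"] order_tendstoD(2)[OF x, of e] eta e
    by (auto elim: eventually_elim2)
  have bnd: "1 - (4 * q ^ mm k + \<rho> ^ mm k) \<le> F (mm k) (x k) \<and> F (mm k) (x k) \<le> 1"
    if xk: "\<eta> / 2 < x k \<and> x k < e" for k
  proof -
    let ?m = "mm k" and ?x = "x k"
    have x0: "0 \<le> ?x" "?x \<le> 1 / 2" using xk e eta by auto
    have L: "1 - F ?m ?x \<le> 2 * (1 - ?x + ?x * (1 / 2)) ^ ?m / (1 / 2) + ((1 - ?x + ?x * t\<^sup>2) / t) ^ ?m"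
      by (rule F_lower) (use x0 t1 in auto)
    have p1: "(1 - ?x + ?x * (1 / 2)) ^ ?m \<le> q ^ ?m"
      by (rule power_mono) (use xk x0 in \<open>auto simp: q_def\<close>)
    have t2: "1 \<le> t\<^sup>2" using t1 by (simp add: one_le_power)
    have "?x * (t\<^sup>2 - 1) \<le> e * (t\<^sup>2 - 1)" using xk t2 by (intro mult_right_mono) auto
    then have "1 - ?x + ?x * t\<^sup>2 \<le> 1 - e + e * t\<^sup>2" by (simp add: algebra_simps)
    then have "(1 - ?x + ?x * t\<^sup>2) / t \<le> \<rho>" unfolding \<rho>_def using t1 by (simp add: divide_right_mono)
    moreover have "0 \<le> (1 - ?x + ?x * t\<^sup>2) / t" using x0 t1 t2
      by (intro divide_nonneg_pos) (auto intro: add_nonneg_nonneg)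
    ultimately have p2: "((1 - ?x + ?x * t\<^sup>2) / t) ^ ?m \<le> \<rho> ^ ?m" by (intro power_mono)
    have "1 - F ?m ?x \<le> 4 * q ^ ?m + \<rho> ^ ?m" using L p1 p2 by simp
    then show ?thesis using F_le1[OF x0] by simp
  qed
  have lim0: "(\<lambda>k. 4 * q ^ mm k + \<rho> ^ mm k) \<longlonglongrightarrow> 0"
  proof -
    have "(\<lambda>k. q ^ mm k) \<longlonglongrightarrow> 0"
      using filterlim_compose[OF LIMSEQ_power_zero[of q] mm] q by simp
    moreover have "(\<lambda>k. \<rho> ^ mm k) \<longlonglongrightarrow> 0"
      using filterlim_compose[OF LIMSEQ_power_zero[of \<rho>] mm] rho0 rho1 by simp
    ultimately have "(\<lambda>k. 4 * q ^ mm k + \<rho> ^ mm k) \<longlonglongrightarrow> 4 * 0 + 0"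
      by (intro tendsto_add tendsto_mult tendsto_const)
    then show ?thesis by simp
  qed
  show ?thesis
  proof (rule tendsto_sandwich)
    show "eventually (\<lambda>k. 1 - (4 * q ^ mm k + \<rho> ^ mm k) \<le> F (mm k) (x k)) sequentially"
      using ev by eventually_elim (use bnd in blast)
    show "eventually (\<lambda>k. F (mm k) (x k) \<le> 1) sequentially"
      using ev by eventually_elim (use bnd in blast)
    show "(\<lambda>k. 1 - (4 * q ^ mm k + \<rho> ^ mm k)) \<longlonglongrightarrow> 1"
      using tendsto_diff[OF tendsto_const lim0, of 1] by simp
  qed simp
qed

theorem mainTheorem10:
  fixes m l :: "nat \<Rightarrow> nat" and \<eta> :: real
  assumes eta: "0 < \<eta>" "\<eta> < 1 / 2"
    and m_pos: "\<forall>k\<ge>3. 0 < m (2 * k)"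
    and l_bounds: "\<forall>k\<ge>3. 2 \<le> l (2 * k) \<and> 2 * l (2 * k) < 2 * k"
    and m_small: "(\<lambda>k. real (m (2 * k))) \<in> o(\<lambda>k. sqrt (real (2 * k)))"
    and l_asymp: "(\<lambda>k. real (l (2 * k)) - \<eta> * real (2 * k)) \<in> o(\<lambda>k. sqrt (real (2 * k)))"
  shows "(\<forall>m0::nat. (\<lambda>k. m (2 * k)) \<longlonglongrightarrow> m0 \<longrightarrow>
            (\<lambda>k. p1 (2 * k) (m (2 * k)) (l (2 * k))) \<longlonglongrightarrow> p_inf m0 \<eta>)
       \<and> (filterlim (\<lambda>k. m (2 * k)) at_top sequentially \<longrightarrow>
            (\<lambda>k. p1 (2 * k) (m (2 * k)) (l (2 * k))) \<longlonglongrightarrow> 1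
            \<and> (\<lambda>m'. p_inf m' \<eta>) \<longlonglongrightarrow> 1)"
proof -
  define X where "X k = real (l (2 * k)) / real (2 * k)" for k
  define B where "B k = real (m (2 * k) + 2 * m (2 * k) * m (2 * k)) / real (2 * k)" for k
  define D where "D k = p1 (2 * k) (m (2 * k)) (l (2 * k)) - F (m (2 * k)) (X k)" for k
  have ev3: "eventually (\<lambda>k. k \<ge> 3) sequentially" by (rule eventually_ge_at_top)
  have hB: "eventually (\<lambda>k. norm (D k) \<le> B k) sequentially"
    using ev3
  proof eventually_elim
    case (elim k)
    then have lb: "2 \<le> l (2 * k)" "2 * l (2 * k) < 2 * k" using l_bounds by auto
    interpret cfg "2 * k" "l (2 * k)" by unfold_locales (use lb in auto)
    show ?case using p1_close[of "m (2 * k)"] unfolding D_def B_def X_def by simp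
  qed
  have r0: "(\<lambda>k. real (m (2 * k)) / sqrt (real (2 * k))) \<longlonglongrightarrow> 0"
    using smalloD_tendsto[OF m_small] .
  have B0: "B \<longlonglongrightarrow> 0"
  proof (rule Lim_null_comparison)
    have "(\<lambda>k. 3 * (real (m (2 * k)) / sqrt (real (2 * k)))\<^sup>2) \<longlonglongrightarrow> 3 * 0\<^sup>2"
      by (intro tendsto_intros r0)
    then show "(\<lambda>k. 3 * (real (m (2 * k)) / sqrt (real (2 * k)))\<^sup>2) \<longlonglongrightarrow> 0" by simp
    show "eventually (\<lambda>k. norm (B k) \<le> 3 * (real (m (2 * k)) / sqrt (real (2 * k)))\<^sup>2) sequentially"
      using ev3
    proof eventually_elim
      case (elim k)
      let ?m = "real (m (2 * k))"
      have k0: "real (2 * k) > 0" using elim by simp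
      have mm: "?m \<le> ?m * ?m"
      proof (cases "m (2 * k) = 0")
        case False
        then have "1 \<le> ?m" by simp
        from mult_left_mono[OF this, of ?m] show ?thesis by simp
      qed simp
      have "B k = (?m + 2 * ?m * ?m) / real (2 * k)" unfolding B_def by simp
      also have "\<dots> \<le> 3 * (?m * ?m) / real (2 * k)" using mm k0 by (intro divide_right_mono) auto
      also have "\<dots> = 3 * (?m / sqrt (real (2 * k)))\<^sup>2" using k0 by (simp add: power_divide power2_eq_square)
      finally show ?case unfolding B_def by simp
    qed
  qed
  have D0: "D \<longlonglongrightarrow> 0" by (rule Lim_null_comparison[OF hB B0])
  have X_lim: "X \<longlonglongrightarrow> \<eta>"
  proof (rule LIM_zero_cancel, rule Lim_null_comparison)
    let ?d = "\<lambda>k. (real (l (2 * k)) - \<eta> * real (2 * k)) / sqrt (real (2 * k))"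
    have d0: "?d \<longlonglongrightarrow> 0" using smalloD_tendsto[OF l_asymp] .
    then show "(\<lambda>k. \<bar>?d k\<bar>) \<longlonglongrightarrow> 0" using tendsto_rabs_zero by blast
    show "eventually (\<lambda>k. norm (X k - \<eta>) \<le> \<bar>?d k\<bar>) sequentially"
      using ev3
    proof eventually_elim
      case (elim k)
      have k0: "real (2 * k) > 0" using elim by simp
      have s1: "1 \<le> sqrt (real (2 * k))" using elim by simp
      have ss: "sqrt (real (2 * k)) * sqrt (real (2 * k)) = real (2 * k)" using k0 by simp
      have "?d k / sqrt (real (2 * k)) = (real (l (2 * k)) - \<eta> * real (2 * k)) / (sqrt (real (2 * k)) * sqrt (real (2 * k)))"
        by simp
      also have "\<dots> = (real (l (2 * k)) - \<eta> * real (2 * k)) / real (2 * k)" unfolding ss ..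
      also have "\<dots> = X k - \<eta>" unfolding X_def using k0 by (simp add: diff_divide_distrib)
      finally have "X k - \<eta> = ?d k / sqrt (real (2 * k))" by simp
      then have "\<bar>X k - \<eta>\<bar> = \<bar>?d k\<bar> / sqrt (real (2 * k))" by simp
      also have "\<dots> \<le> \<bar>?d k\<bar>"
      proof -
        have gen: "a / sqrt (real (2 * k)) \<le> a" if "0 \<le> a" for a :: real
        proof -
          have "a * 1 \<le> a * sqrt (real (2 * k))" using mult_left_mono[OF s1 that] .
          then show ?thesis using s1 by (simp add: divide_le_eq)
        qed
        show ?thesis by (rule gen) simp
      qed
      finally show ?case by simp
    qed
  qed
  have p1_eq: "(\<lambda>k. p1 (2 * k) (m (2 * k)) (l (2 * k))) = (\<lambda>k. D k + F (m (2 * k)) (X k))"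
    unfolding D_def by simp
  have part1: "(\<lambda>k. p1 (2 * k) (m (2 * k)) (l (2 * k))) \<longlonglongrightarrow> p_inf m0 \<eta>"
    if mt: "(\<lambda>k. m (2 * k)) \<longlonglongrightarrow> m0" for m0 :: nat
  proof -
    have evm: "eventually (\<lambda>k. m (2 * k) \<in> {m0}) sequentially"
    proof (rule topological_tendstoD[OF mt])
      show "open {m0}" by (rule discrete_topology_class.open_discrete)
    qed simp
    have "(\<lambda>k. F m0 (X k)) \<longlonglongrightarrow> F m0 \<eta>" by (rule F_cont[OF X_lim])
    moreover have "eventually (\<lambda>k. F m0 (X k) = F (m (2 * k)) (X k)) sequentially"
      using evm by eventually_elim simp
    ultimately have "(\<lambda>k. F (m (2 * k)) (X k)) \<longlonglongrightarrow> F m0 \<eta>" by (rule Lim_transform_eventually)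
    then have "(\<lambda>k. D k + F (m (2 * k)) (X k)) \<longlonglongrightarrow> 0 + F m0 \<eta>" by (intro tendsto_add D0)
    then show ?thesis unfolding p1_eq p_inf_F[OF eta] by simp
  qed
  have part2: "(\<lambda>k. p1 (2 * k) (m (2 * k)) (l (2 * k))) \<longlonglongrightarrow> 1 \<and> (\<lambda>m'. p_inf m' \<eta>) \<longlonglongrightarrow> 1"
    if mt: "filterlim (\<lambda>k. m (2 * k)) at_top sequentially"
  proof
    have "(\<lambda>k. F (m (2 * k)) (X k)) \<longlonglongrightarrow> 1" by (rule F_to_one[OF eta mt X_lim])
    then have "(\<lambda>k. D k + F (m (2 * k)) (X k)) \<longlonglongrightarrow> 0 + 1" by (intro tendsto_add D0)
    then show "(\<lambda>k. p1 (2 * k) (m (2 * k)) (l (2 * k))) \<longlonglongrightarrow> 1" unfolding p1_eq by simp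
    have "(\<lambda>k. F (id k) ((\<lambda>_. \<eta>) k)) \<longlonglongrightarrow> 1"
      by (rule F_to_one[OF eta]) (auto simp: filterlim_ident)
    then show "(\<lambda>m'. p_inf m' \<eta>) \<longlonglongrightarrow> 1" using p_inf_F[OF eta] by simp
  qed
  show ?thesis using part1 part2 by blast
qed

end
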